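(* Let $\mathcal{F}$, $S(f)$ and $C(f)$ ($f\in\mathcal{F}$) be as in the context, and let $\{V\}\cup\{A_\beta:\beta<\mathfrak{c}\}$ be a pairwise disjoint family of Bernstein sets in $(0,1)$, all disjoint from $\mathbb{Q}$, such that for every $f\in\mathcal{F}$ with $|f[S(f)]|=\mathfrak{c}$ and every $\beta<\mathfrak{c}$ both $C(f)\cap A_\beta$ and $f[C(f)\cap A_\beta]\cap V$ have cardinality $\mathfrak{c}$. Let $X$ and $Y$ be subsets of $(0,1)$ such that $\mathbb{Q}\cap(0,1)\subseteq X$ and such that there is an $\alpha<\mathfrak{c}$ with $A_\alpha\subseteq X$ and $Y\cap(A_\alpha\cup V)=\emptyset$. Then every continuous map $s:\mathbb{A}_X\to\mathbb{A}_Y$ has countable range.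
   Context: $\mathfrak{c}=2^{\aleph_0}$. $\mathcal{F}$ is the set of all functions $f$ such that $\operatorname{dom} f$ is a co-countable subset of $[0,1]$ and $f:\operatorname{dom} f\to[0,1]$ is continuous; $S(f)=\{x\in\operatorname{dom} f:f(x)\neq x\}$, and for each $f\in\mathcal{F}$ a subset $C(f)\subseteq\operatorname{dom} f$ is fixed such that $f$ restricted to $C(f)$ is a bijection onto $f[S(f)]$. A Bernstein set in $[0,1]$ is a set $A$ such that both $A$ and its complement meet every uncountable closed subset of $[0,1]$. Let $D=([0,1]\times\{0,1\})\setminus\{\langle 0,0\rangle,\langle 0,1\rangle\}$, ordered lexicographically. For $X\subseteq(0,1)$ let $\mathbb{A}_X=\{\langle x,i\rangle\in D: x\in X\Rightarrow i=0\}$ (so only points of $(0,1)\setminus X$ are split into two copies), with the order topology of the lexicographic order; points $x\in X$ are identified with $\langle x,0\rangle$. *)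

theory Defs
  imports "HOL-Analysis.Analysis" "HOL-Library.Equipollence"
begin

definition bernstein :: "real set \<Rightarrow> bool" where
  "bernstein A \<longleftrightarrow> (\<forall>K. closed K \<and> K \<subseteq> {0..1} \<and> uncountable K \<longrightarrow>
      A \<inter> K \<noteq> {} \<and> ({0..1} - A) \<inter> K \<noteq> {})"

definition in_F :: "real set \<Rightarrow> (real \<Rightarrow> real) \<Rightarrow> bool" where
  "in_F D f \<longleftrightarrow> D \<subseteq> {0..1} \<and> countable ({0..1} - D) \<and>
      continuous_on D f \<and> f ` D \<subseteq> {0..1}"

definition S_set :: "real set \<Rightarrow> (real \<Rightarrow> real) \<Rightarrow> real set" where
  "S_set D f = {x \<in> D. f x \<noteq> x}"

definition card_c :: "'a set \<Rightarrow> bool" where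
  "card_c A \<longleftrightarrow> A \<approx> (UNIV :: real set)"

definition Dlex :: "(real \<times> nat) set" where
  "Dlex = ({0..1} \<times> {0,1}) - {(0,0),(0,1)}"

definition lex_less :: "real \<times> nat \<Rightarrow> real \<times> nat \<Rightarrow> bool" where
  "lex_less p q \<longleftrightarrow> fst p < fst q \<or> (fst p = fst q \<and> snd p < snd q)"

definition AA :: "real set \<Rightarrow> (real \<times> nat) set" where
  "AA X = {p \<in> Dlex. fst p \<in> X \<longrightarrow> snd p = 0}"

definition AA_top :: "real set \<Rightarrow> (real \<times> nat) topology" where
  "AA_top X = topology_generated_by
     (insert (AA X) ({{p \<in> AA X. lex_less p a} | a. a \<in> AA X} \<union>
                     {{p \<in> AA X. lex_less a p} | a. a \<in> AA X}))"

end

theory Submission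
  imports Defs
begin



lemma real_inj_cantor: "\<exists>f::real \<Rightarrow> (nat \<Rightarrow> bool). inj f"
proof -
  define rn where "rn = from_nat_into (\<rat>::real set)"
  have rr: "range rn = \<rat>" unfolding rn_def
    by (metis Rats_0 countable_rat empty_iff range_from_nat_into)
  have "inj (\<lambda>r. \<lambda>n. rn n < r)"
  proof (rule injI)
    fix r r' :: real assume e: "(\<lambda>n. rn n < r) = (\<lambda>n. rn n < r')"
    show "r = r'"
    proof (rule ccontr)
      assume "r \<noteq> r'"
      then consider "r < r'" | "r' < r" by linarith
      then show False
      proof cases
        case 1
        then obtain q where q: "q \<in> \<rat>" "r < q" "q < r'" using Rats_dense_in_real by blast
        then obtain m where "rn m = q" using rr by (metis imageE)
        then show False using e q by (metis less_asym)
      next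
        case 2
        then obtain q where q: "q \<in> \<rat>" "r' < q" "q < r" using Rats_dense_in_real by blast
        then obtain m where "rn m = q" using rr by (metis imageE)
        then show False using e q by (metis less_asym)
      qed
    qed
  qed
  then show ?thesis by blast
qed

lemma uncountable_cantor: "uncountable (UNIV :: (nat \<Rightarrow> bool) set)"
proof
  assume "countable (UNIV :: (nat \<Rightarrow> bool) set)"
  moreover obtain f :: "real \<Rightarrow> (nat \<Rightarrow> bool)" where "inj f" using real_inj_cantor by blast
  ultimately have "countable (UNIV :: real set)"
    by (meson countable_image_inj_on countable_subset subset_UNIV)
  then show False using uncountable_UNIV_real by blast
qed

definition cond_pts :: "real set \<Rightarrow> real set" where
  "cond_pts U = {x \<in> U. \<forall>e>0. uncountable (U \<inter> ball x e)}"

lemma countable_noncond: "countable (U - cond_pts U)"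
proof -
  define W where "W = (\<lambda>r1 r2. if countable (U \<inter> {r1<..<r2}) then U \<inter> {r1<..<r2} else {})"
  have "U - cond_pts U \<subseteq> (\<Union>r1\<in>\<rat>. \<Union>r2\<in>\<rat>. W r1 r2)"
  proof
    fix x assume x: "x \<in> U - cond_pts U"
    then obtain e where e: "e > 0" "countable (U \<inter> ball x e)"
      unfolding cond_pts_def by auto
    obtain r1 where r1: "r1 \<in> \<rat>" "x - e < r1" "r1 < x" using Rats_dense_in_real[of "x-e" x] e by auto
    obtain r2 where r2: "r2 \<in> \<rat>" "x < r2" "r2 < x + e" using Rats_dense_in_real[of x "x+e"] e by auto
    have sub: "U \<inter> {r1<..<r2} \<subseteq> U \<inter> ball x e"
      using r1 r2 by (auto simp: dist_real_def)
    then have "countable (U \<inter> {r1<..<r2})" using e countable_subset by blast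
    then have "x \<in> W r1 r2" unfolding W_def using x r1 r2 by auto
    then show "x \<in> (\<Union>r1\<in>\<rat>. \<Union>r2\<in>\<rat>. W r1 r2)" using r1 r2 by blast
  qed
  moreover have "countable (\<Union>r1\<in>\<rat>. \<Union>r2\<in>\<rat>. W r1 r2)"
    by (intro countable_UN countable_rat) (auto simp: W_def)
  ultimately show ?thesis using countable_subset by blast
qed

lemma two_cond_pts:
  assumes "uncountable (U::real set)"
  obtains p q where "p \<in> U" "q \<in> U" "p < q" "\<And>e. e > 0 \<Longrightarrow> uncountable (U \<inter> ball p e)"
    "\<And>e. e > 0 \<Longrightarrow> uncountable (U \<inter> ball q e)"
proof -
  have "uncountable (cond_pts U)"
  proof
    assume "countable (cond_pts U)"
    then have "countable (cond_pts U \<union> (U - cond_pts U))" using countable_noncond by blast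
    moreover have "cond_pts U \<union> (U - cond_pts U) = U" unfolding cond_pts_def by auto
    ultimately show False using assms by simp
  qed
  then have "infinite (cond_pts U)" using countable_finite by blast
  then obtain p q where "p \<in> cond_pts U" "q \<in> cond_pts U" "p \<noteq> q"
    by (metis finite.intros(1) finite_insert infinite_imp_nonempty insertCI subsetI finite_subset)
  then show ?thesis using that unfolding cond_pts_def
    by (metis (no_types, lifting) linorder_neq_iff mem_Collect_eq)
qed

definition goodI :: "real set \<Rightarrow> real \<times> real \<Rightarrow> bool" where
  "goodI K ab \<longleftrightarrow> fst ab < snd ab \<and> uncountable (K \<inter> {fst ab<..<snd ab})"

definition split_spec :: "real set \<Rightarrow> real \<times> real \<Rightarrow> real \<Rightarrow> (real \<times> real) \<times> (real \<times> real) \<Rightarrow> bool" where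
  "split_spec K ab n lr \<longleftrightarrow> goodI K (fst lr) \<and> goodI K (snd lr) \<and>
     fst ab \<le> fst (fst lr) \<and> snd (fst lr) < fst (snd lr) \<and> snd (snd lr) \<le> snd ab \<and>
     n \<notin> {fst (fst lr)..snd (fst lr)} \<and> n \<notin> {fst (snd lr)..snd (snd lr)}"

lemma split_exists:
  assumes "goodI K ab"
  shows "\<exists>lr. split_spec K ab n lr"
proof -
  obtain a b where ab: "ab = (a,b)" by fastforce
  define U where "U = K \<inter> {a<..<b} - {n}"
  have "uncountable U" using assms unfolding U_def goodI_def ab
    by (metis countable_insert fst_conv insert_Diff_single snd_conv countable_subset subset_insertI)
  then obtain p q where pq: "p \<in> U" "q \<in> U" "p < q" "\<And>e. e > 0 \<Longrightarrow> uncountable (U \<inter> ball p e)"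
    "\<And>e. e > 0 \<Longrightarrow> uncountable (U \<inter> ball q e)" using two_cond_pts by blast
  define e where "e = Min {p - a, b - q, (q - p)/3, \<bar>p - n\<bar>, \<bar>q - n\<bar>} / 2"
  have pos: "p - a > 0" "b - q > 0" "(q-p)/3 > 0" "\<bar>p - n\<bar> > 0" "\<bar>q - n\<bar> > 0"
    using pq unfolding U_def by auto
  have e0: "e > 0" unfolding e_def using pos by simp
  have e1: "2*e \<le> p - a" "2*e \<le> b - q" "2*e \<le> (q-p)/3" "2*e \<le> \<bar>p - n\<bar>" "2*e \<le> \<bar>q - n\<bar>"
    unfolding e_def by (auto simp: min_def)
  have bp: "U \<inter> ball p e \<subseteq> K \<inter> {p-e<..<p+e}" unfolding U_def by (auto simp: dist_real_def)
  have bq: "U \<inter> ball q e \<subseteq> K \<inter> {q-e<..<q+e}" unfolding U_def by (auto simp: dist_real_def)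
  have g1: "goodI K (p-e, p+e)" unfolding goodI_def using e0 pq(4)[OF e0] countable_subset[OF bp] by auto
  have g2: "goodI K (q-e, q+e)" unfolding goodI_def using e0 pq(5)[OF e0] countable_subset[OF bq] by auto
  have "split_spec K ab n ((p-e,p+e),(q-e,q+e))"
    unfolding split_spec_def ab using g1 g2 e1 e0 by auto
  then show ?thesis by blast
qed



definition spl :: "real set \<Rightarrow> real \<times> real \<Rightarrow> real \<Rightarrow> (real \<times> real) \<times> (real \<times> real)" where
  "spl K ab n = (SOME lr. split_spec K ab n lr)"

fun tree :: "real set \<Rightarrow> (nat \<Rightarrow> real) \<Rightarrow> real \<times> real \<Rightarrow> nat \<Rightarrow> (nat \<Rightarrow> bool) \<Rightarrow> real \<times> real" where
  "tree K en ab0 0 \<beta> = ab0"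
| "tree K en ab0 (Suc k) \<beta> = (if \<beta> k then snd (spl K (tree K en ab0 k \<beta>) (en k))
                                       else fst (spl K (tree K en ab0 k \<beta>) (en k)))"

abbreviation cl :: "real \<times> real \<Rightarrow> real set" where "cl ab \<equiv> {fst ab..snd ab}"

lemma spl_spec: "goodI K ab \<Longrightarrow> split_spec K ab n (spl K ab n)"
  unfolding spl_def by (rule someI_ex) (rule split_exists)

lemma tree_good: "goodI K ab0 \<Longrightarrow> goodI K (tree K en ab0 k \<beta>)"
proof (induction k)
  case 0 then show ?case by simp
next
  case (Suc k)
  have s: "split_spec K (tree K en ab0 k \<beta>) (en k) (spl K (tree K en ab0 k \<beta>) (en k))"
    using spl_spec Suc by blast
  show ?case by (cases "\<beta> k") (use s in \<open>simp_all add: split_spec_def\<close>)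
qed

lemma tree_step:
  assumes "goodI K ab0"
  shows "cl (tree K en ab0 (Suc k) \<beta>) \<subseteq> cl (tree K en ab0 k \<beta>)"
    "en k \<notin> cl (tree K en ab0 (Suc k) \<beta>)"
proof -
  have s: "split_spec K (tree K en ab0 k \<beta>) (en k) (spl K (tree K en ab0 k \<beta>) (en k))"
    using spl_spec tree_good assms by blast
  show "cl (tree K en ab0 (Suc k) \<beta>) \<subseteq> cl (tree K en ab0 k \<beta>)"
    using s unfolding split_spec_def goodI_def by auto
  show "en k \<notin> cl (tree K en ab0 (Suc k) \<beta>)"
    using s unfolding split_spec_def by auto
qed

lemma tree_mono:
  assumes "goodI K ab0" "m \<le> k"
  shows "cl (tree K en ab0 k \<beta>) \<subseteq> cl (tree K en ab0 m \<beta>)"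
  using assms(2)
proof (induction k)
  case 0 then show ?case by simp
next
  case (Suc k)
  then show ?case using tree_step(1)[OF assms(1), of en k \<beta>]
    by (metis le_Suc_eq order_refl order_trans)
qed

lemma tree_prefix: "(\<And>i. i < k \<Longrightarrow> \<beta> i = \<beta>' i) \<Longrightarrow> tree K en ab0 k \<beta> = tree K en ab0 k \<beta>'"
  by (induction k) auto

lemma tree_disj:
  assumes "goodI K ab0" "\<beta> k \<noteq> \<beta>' k" "tree K en ab0 k \<beta> = tree K en ab0 k \<beta>'"
  shows "cl (tree K en ab0 (Suc k) \<beta>) \<inter> cl (tree K en ab0 (Suc k) \<beta>') = {}"
proof -
  have s: "split_spec K (tree K en ab0 k \<beta>) (en k) (spl K (tree K en ab0 k \<beta>) (en k))"
    using spl_spec tree_good assms by blast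
  obtain l r where lr: "spl K (tree K en ab0 k \<beta>) (en k) = (l, r)" by (metis surj_pair)
  have "snd l < fst r" using s lr unfolding split_spec_def by simp
  then have d: "cl l \<inter> cl r = {}" by auto
  show ?thesis
  proof (cases "\<beta> k")
    case True
    then have "\<not> \<beta>' k" using assms(2) by simp
    then show ?thesis using True d lr assms(3) by (simp add: Int_commute)
  next
    case False
    then have "\<beta>' k" using assms(2) by simp
    then show ?thesis using False d lr assms(3) by simp
  qed
qed

definition trunc :: "nat \<Rightarrow> (nat \<Rightarrow> bool) \<Rightarrow> (nat \<Rightarrow> bool)" where
  "trunc k \<beta> = (\<lambda>i. if i < k then \<beta> i else False)"

lemma finite_trunc: "finite {\<beta>::nat\<Rightarrow>bool. \<forall>i\<ge>k. \<not> \<beta> i}"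
proof (induction k)
  case 0
  have "{\<beta>::nat\<Rightarrow>bool. \<forall>i\<ge>0. \<not> \<beta> i} = {\<lambda>i. False}" by auto
  then show ?case by simp
next
  case (Suc k)
  have "{\<beta>::nat\<Rightarrow>bool. \<forall>i\<ge>Suc k. \<not> \<beta> i} \<subseteq>
        (\<lambda>(b,\<beta>). \<beta>(k:=b)) ` (UNIV \<times> {\<beta>::nat\<Rightarrow>bool. \<forall>i\<ge>k. \<not> \<beta> i})"
  proof
    fix \<beta> :: "nat \<Rightarrow> bool" assume b: "\<beta> \<in> {\<beta>. \<forall>i\<ge>Suc k. \<not> \<beta> i}"
    have "\<beta> = (\<lambda>(b,\<gamma>). \<gamma>(k:=b)) (\<beta> k, \<beta>(k:=False))" by auto
    moreover have "(\<beta> k, \<beta>(k:=False)) \<in> UNIV \<times> {\<beta>::nat\<Rightarrow>bool. \<forall>i\<ge>k. \<not> \<beta> i}"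
    proof -
      { fix i assume i: "i \<ge> k"
        have "\<not> (\<beta>(k:=False)) i"
        proof (cases "i = k")
          case True then show ?thesis by simp
        next
          case False with i have "i \<ge> Suc k" by simp
          then show ?thesis using b by simp
        qed }
      then show ?thesis by simp
    qed
    ultimately show "\<beta> \<in> (\<lambda>(b,\<beta>). \<beta>(k:=b)) ` (UNIV \<times> {\<beta>::nat\<Rightarrow>bool. \<forall>i\<ge>k. \<not> \<beta> i})"
      by blast
  qed
  moreover have "finite ((\<lambda>(b,\<beta>). \<beta>(k:=b)) ` (UNIV \<times> {\<beta>::nat\<Rightarrow>bool. \<forall>i\<ge>k. \<not> \<beta> i}))"
    using Suc by simp
  ultimately show ?case using finite_subset by blast
qed

lemma finite_tree_range: "finite (range (tree K en ab0 k))"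
proof -
  have "range (tree K en ab0 k) \<subseteq> tree K en ab0 k ` {\<beta>::nat\<Rightarrow>bool. \<forall>i\<ge>k. \<not> \<beta> i}"
  proof
    fix x assume "x \<in> range (tree K en ab0 k)"
    then obtain \<beta> where x: "x = tree K en ab0 k \<beta>" by blast
    have "tree K en ab0 k \<beta> = tree K en ab0 k (trunc k \<beta>)"
      by (rule tree_prefix) (simp add: trunc_def)
    moreover have "trunc k \<beta> \<in> {\<beta>::nat\<Rightarrow>bool. \<forall>i\<ge>k. \<not> \<beta> i}" by (simp add: trunc_def)
    ultimately show "x \<in> tree K en ab0 k ` {\<beta>::nat\<Rightarrow>bool. \<forall>i\<ge>k. \<not> \<beta> i}" using x by blast
  qed
  then show ?thesis using finite_subset finite_trunc by blast
qed

lemma perfect_avoid: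
  fixes K N :: "real set"
  assumes K: "closed K" "K \<subseteq> {0..1}" "uncountable K" and N: "countable N"
  shows "\<exists>K'. closed K' \<and> K' \<subseteq> K - N \<and> (\<exists>c::(nat\<Rightarrow>bool)\<Rightarrow>real. inj c \<and> range c \<subseteq> K')"
proof -
  define en where "en = from_nat_into (insert 2 N)"
  have "range en = insert 2 N" unfolding en_def
    by (rule range_from_nat_into) (auto simp: N)
  then have Nen: "N \<subseteq> range en" by blast
  define ab0 where "ab0 = ((-1::real), (2::real))"
  have g0: "goodI K ab0" unfolding goodI_def ab0_def
  proof -
    have "K \<inter> {-1<..<2} = K" using K(2) by auto
    then show "fst (-1::real, 2::real) < snd (-1::real, 2::real) \<and> uncountable (K \<inter> {fst (-1::real, 2::real)<..<snd (-1::real, 2::real)})"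
      using K(3) by simp
  qed
  define T where "T = tree K en ab0"
  define F where "F = (\<lambda>k \<beta>. K \<inter> cl (T k \<beta>))"
  have Fne: "F k \<beta> \<noteq> {}" for k \<beta>
  proof -
    have "goodI K (T k \<beta>)" unfolding T_def using tree_good g0 by blast
    then have "K \<inter> {fst (T k \<beta>)<..<snd (T k \<beta>)} \<noteq> {}" unfolding goodI_def by auto
    then show ?thesis unfolding F_def by auto
  qed
  have Fmono: "m \<le> k \<Longrightarrow> F k \<beta> \<subseteq> F m \<beta>" for m k \<beta>
    unfolding F_def T_def using tree_mono[OF g0] by blast
  have Fclosed: "closed (F k \<beta>)" for k \<beta> unfolding F_def using K(1) by (simp add: closed_Int)
  have Fcomp: "compact (F k \<beta>)" for k \<beta>
    unfolding F_def by (meson K(1) closed_Int_compact compact_Icc)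
  have Inter_ne: "(\<Inter>k. F k \<beta>) \<noteq> {}" for \<beta>
  proof -
    have "F 0 \<beta> \<inter> (\<Inter>k\<in>UNIV. F k \<beta>) \<noteq> {}"
    proof (rule compact_imp_fip_image[OF Fcomp Fclosed])
      fix I' :: "nat set" assume I': "finite I'" "I' \<subseteq> UNIV"
      define m where "m = Max (insert 0 I')"
      have "F m \<beta> \<subseteq> F 0 \<beta> \<inter> (\<Inter>i\<in>I'. F i \<beta>)"
      proof -
        have "F m \<beta> \<subseteq> F i \<beta>" if "i \<in> insert 0 I'" for i
          using Fmono Max_ge[of "insert 0 I'" i] I'(1) that unfolding m_def by blast
        then show ?thesis by blast
      qed
      then show "F 0 \<beta> \<inter> (\<Inter>i\<in>I'. F i \<beta>) \<noteq> {}" using Fne by blast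
    qed
    then show ?thesis by blast
  qed
  define c where "c = (\<lambda>\<beta>. SOME x. x \<in> (\<Inter>k. F k \<beta>))"
  have cin: "c \<beta> \<in> F k \<beta>" for \<beta> k
  proof -
    obtain x where "x \<in> (\<Inter>k. F k \<beta>)" using Inter_ne[of \<beta>] by blast
    then have "c \<beta> \<in> (\<Inter>k. F k \<beta>)" unfolding c_def by (rule someI)
    then show ?thesis by blast
  qed
  define K' where "K' = (\<Inter>k. K \<inter> (\<Union>\<beta>. cl (T k \<beta>)))"
  have "closed K'" unfolding K'_def
  proof (intro closed_INT ballI closed_Int K(1))
    fix k :: nat
    have "(\<Union>\<beta>. cl (T k \<beta>)) = (\<Union>ab\<in>range (T k). cl ab)" by auto
    moreover have "finite (range (T k))" unfolding T_def by (rule finite_tree_range)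
    moreover have "closed (\<Union>ab\<in>range (T k). cl ab)"
      by (rule closed_UN) (use calculation in auto)
    ultimately show "closed (\<Union>\<beta>. cl (T k \<beta>))" by simp
  qed
  moreover have "K' \<subseteq> K - N"
  proof
    fix x assume x: "x \<in> K'"
    then have "x \<in> K" unfolding K'_def by blast
    moreover have "x \<notin> N"
    proof
      assume "x \<in> N"
      then obtain m where m: "x = en m" using Nen by blast
      obtain \<beta> where "x \<in> cl (T (Suc m) \<beta>)" using x unfolding K'_def by blast
      then show False using tree_step(2)[OF g0, of en m \<beta>] m unfolding T_def by blast
    qed
    ultimately show "x \<in> K - N" by blast
  qed
  moreover have "inj c"
  proof (rule injI)
    fix \<beta> \<beta>' assume eq: "c \<beta> = c \<beta>'"
    show "\<beta> = \<beta>'"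
    proof (rule ccontr)
      assume "\<beta> \<noteq> \<beta>'"
      then have "\<exists>k. \<beta> k \<noteq> \<beta>' k" by auto
      then obtain k where k: "\<beta> k \<noteq> \<beta>' k" "\<And>i. i < k \<Longrightarrow> \<beta> i = \<beta>' i"
        using exists_least_iff[of "\<lambda>k. \<beta> k \<noteq> \<beta>' k"] by blast
      have "T k \<beta> = T k \<beta>'" unfolding T_def by (rule tree_prefix) (use k in auto)
      then have "cl (T (Suc k) \<beta>) \<inter> cl (T (Suc k) \<beta>') = {}"
        using tree_disj[where \<beta>=\<beta> and \<beta>'=\<beta>' and k=k, OF g0 k(1)] unfolding T_def by blast
      moreover have "c \<beta> \<in> cl (T (Suc k) \<beta>)" "c \<beta>' \<in> cl (T (Suc k) \<beta>')"
        using cin unfolding F_def by blast+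
      ultimately show False using eq by auto
    qed
  qed
  moreover have "range c \<subseteq> K'"
    unfolding K'_def using cin unfolding F_def by blast
  ultimately show ?thesis by blast
qed



lemma AA_mem: "p \<in> AA X \<longleftrightarrow> fst p \<in> {0..1} \<and> snd p \<in> {0,1} \<and> fst p \<noteq> 0 \<and> (fst p \<in> X \<longrightarrow> snd p = 0)"
  by (cases p) (auto simp: AA_def Dlex_def)

lemma AA_pair: "(x, i) \<in> AA X \<longleftrightarrow> 0 < x \<and> x \<le> 1 \<and> (i = 0 \<or> i = 1) \<and> (x \<in> X \<longrightarrow> i = 0)"
  by (auto simp: AA_mem)

lemma topspace_AA: "topspace (AA_top X) = AA X"
  unfolding AA_top_def topology_generated_by_topspace by auto

lemma lex_less_trans: "lex_less p q \<Longrightarrow> lex_less q r \<Longrightarrow> lex_less p r"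
  unfolding lex_less_def by auto

definition nb :: "real set \<Rightarrow> (real \<times> nat) set \<Rightarrow> bool" where
  "nb X U \<longleftrightarrow> (\<forall>p\<in>U \<inter> AA X.
     (snd p = 0 \<longrightarrow> (\<exists>a<fst p. \<forall>q\<in>AA X. a < fst q \<and> fst q < fst p \<longrightarrow> q \<in> U)) \<and>
     ((fst p \<in> X \<or> snd p = 1) \<longrightarrow> (\<exists>b>fst p. \<forall>q\<in>AA X. fst p < fst q \<and> fst q < b \<longrightarrow> q \<in> U)))"

lemma nb_Int: "nb X U \<Longrightarrow> nb X V \<Longrightarrow> nb X (U \<inter> V)"
  unfolding nb_def
proof (intro ballI conjI impI)
  fix p assume U: "\<forall>p\<in>U \<inter> AA X.
     (snd p = 0 \<longrightarrow> (\<exists>a<fst p. \<forall>q\<in>AA X. a < fst q \<and> fst q < fst p \<longrightarrow> q \<in> U)) \<and>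
     ((fst p \<in> X \<or> snd p = 1) \<longrightarrow> (\<exists>b>fst p. \<forall>q\<in>AA X. fst p < fst q \<and> fst q < b \<longrightarrow> q \<in> U))"
    and V: "\<forall>p\<in>V \<inter> AA X.
     (snd p = 0 \<longrightarrow> (\<exists>a<fst p. \<forall>q\<in>AA X. a < fst q \<and> fst q < fst p \<longrightarrow> q \<in> V)) \<and>
     ((fst p \<in> X \<or> snd p = 1) \<longrightarrow> (\<exists>b>fst p. \<forall>q\<in>AA X. fst p < fst q \<and> fst q < b \<longrightarrow> q \<in> V))"
    and p: "p \<in> U \<inter> V \<inter> AA X"
  {
    assume "snd p = 0"
    then obtain a1 a2 where "a1 < fst p" "\<forall>q\<in>AA X. a1 < fst q \<and> fst q < fst p \<longrightarrow> q \<in> U"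
      "a2 < fst p" "\<forall>q\<in>AA X. a2 < fst q \<and> fst q < fst p \<longrightarrow> q \<in> V"
      using U V p by blast
    then show "\<exists>a<fst p. \<forall>q\<in>AA X. a < fst q \<and> fst q < fst p \<longrightarrow> q \<in> U \<inter> V"
      by (intro exI[of _ "max a1 a2"]) auto
  }
  {
    assume "fst p \<in> X \<or> snd p = 1"
    then obtain b1 b2 where "b1 > fst p" "\<forall>q\<in>AA X. fst p < fst q \<and> fst q < b1 \<longrightarrow> q \<in> U"
      "b2 > fst p" "\<forall>q\<in>AA X. fst p < fst q \<and> fst q < b2 \<longrightarrow> q \<in> V"
      using U V p by blast
    then show "\<exists>b>fst p. \<forall>q\<in>AA X. fst p < fst q \<and> fst q < b \<longrightarrow> q \<in> U \<inter> V"
      by (intro exI[of _ "min b1 b2"]) auto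
  }
qed

lemma nb_Union: "(\<And>k. k \<in> KK \<Longrightarrow> nb X k) \<Longrightarrow> nb X (\<Union>KK)"
  unfolding nb_def
proof (intro ballI conjI impI)
  fix p assume H: "\<And>k. k \<in> KK \<Longrightarrow> \<forall>p\<in>k \<inter> AA X.
     (snd p = 0 \<longrightarrow> (\<exists>a<fst p. \<forall>q\<in>AA X. a < fst q \<and> fst q < fst p \<longrightarrow> q \<in> k)) \<and>
     ((fst p \<in> X \<or> snd p = 1) \<longrightarrow> (\<exists>b>fst p. \<forall>q\<in>AA X. fst p < fst q \<and> fst q < b \<longrightarrow> q \<in> k))"
    and p: "p \<in> \<Union>KK \<inter> AA X"
  then obtain k where k: "k \<in> KK" "p \<in> k" by blast
  {
    assume "snd p = 0"
    then obtain a where "a < fst p" "\<forall>q\<in>AA X. a < fst q \<and> fst q < fst p \<longrightarrow> q \<in> k"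
      using H[OF k(1)] k p by blast
    then show "\<exists>a<fst p. \<forall>q\<in>AA X. a < fst q \<and> fst q < fst p \<longrightarrow> q \<in> \<Union>KK"
      using k by blast
  }
  {
    assume "fst p \<in> X \<or> snd p = 1"
    then obtain b where "b > fst p" "\<forall>q\<in>AA X. fst p < fst q \<and> fst q < b \<longrightarrow> q \<in> k"
      using H[OF k(1)] k p by blast
    then show "\<exists>b>fst p. \<forall>q\<in>AA X. fst p < fst q \<and> fst q < b \<longrightarrow> q \<in> \<Union>KK"
      using k by blast
  }
qed

lemma nb_AA: "nb X (AA X)"
  unfolding nb_def
proof (intro ballI conjI impI)
  fix p show "\<exists>a<fst p. \<forall>q\<in>AA X. a < fst q \<and> fst q < fst p \<longrightarrow> q \<in> AA X"
    by (intro exI[of _ "fst p - 1"]) auto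
  show "\<exists>b>fst p. \<forall>q\<in>AA X. fst p < fst q \<and> fst q < b \<longrightarrow> q \<in> AA X"
    by (intro exI[of _ "fst p + 1"]) auto
qed

lemma nb_lt: "a \<in> AA X \<Longrightarrow> nb X {p \<in> AA X. lex_less p a}"
  unfolding nb_def
proof (intro ballI conjI impI)
  fix p assume a: "a \<in> AA X" and p: "p \<in> {p \<in> AA X. lex_less p a} \<inter> AA X"
  show "\<exists>a'<fst p. \<forall>q\<in>AA X. a' < fst q \<and> fst q < fst p \<longrightarrow> q \<in> {p \<in> AA X. lex_less p a}"
    using p by (intro exI[of _ "fst p - 1"]) (auto simp: lex_less_def)
  assume h: "fst p \<in> X \<or> snd p = 1"
  have "fst p < fst a"
  proof (rule ccontr)
    assume "\<not> fst p < fst a"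
    with p have "fst p = fst a" "snd p < snd a" by (auto simp: lex_less_def)
    then show False using a p h by (auto simp: AA_mem)
  qed
  then show "\<exists>b>fst p. \<forall>q\<in>AA X. fst p < fst q \<and> fst q < b \<longrightarrow> q \<in> {p \<in> AA X. lex_less p a}"
    by (intro exI[of _ "fst a"]) (auto simp: lex_less_def)
qed

lemma nb_gt: "a \<in> AA X \<Longrightarrow> nb X {p \<in> AA X. lex_less a p}"
  unfolding nb_def
proof (intro ballI conjI impI)
  fix p assume a: "a \<in> AA X" and p: "p \<in> {p \<in> AA X. lex_less a p} \<inter> AA X"
  show "\<exists>b>fst p. \<forall>q\<in>AA X. fst p < fst q \<and> fst q < b \<longrightarrow> q \<in> {p \<in> AA X. lex_less a p}"
    using p by (intro exI[of _ "fst p + 1"]) (auto simp: lex_less_def)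
  assume h: "snd p = 0"
  have "fst a < fst p" using p h by (auto simp: lex_less_def)
  then show "\<exists>a'<fst p. \<forall>q\<in>AA X. a' < fst q \<and> fst q < fst p \<longrightarrow> q \<in> {p \<in> AA X. lex_less a p}"
    by (intro exI[of _ "fst a"]) (auto simp: lex_less_def)
qed

lemma open_nb:
  assumes "openin (AA_top X) U" shows "nb X U"
proof -
  have "generate_topology_on (insert (AA X) ({{p \<in> AA X. lex_less p a} | a. a \<in> AA X} \<union>
                     {{p \<in> AA X. lex_less a p} | a. a \<in> AA X})) U"
    using assms unfolding AA_top_def by (rule openin_topology_generated_by)
  then show ?thesis
  proof (induction rule: generate_topology_on.induct)
    case Empty then show ?case by (simp add: nb_def)
  next
    case (Int a b) then show ?case using nb_Int by blast
  next
    case (UN K) then show ?case using nb_Union by blast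
  next
    case (Basis s) then show ?case using nb_AA nb_lt nb_gt by blast
  qed
qed

lemma open_ray_lt: "a \<in> AA Y \<Longrightarrow> openin (AA_top Y) {q \<in> AA Y. lex_less q a}"
  unfolding AA_top_def by (rule topology_generated_by_Basis) blast

lemma open_ray_gt: "a \<in> AA Y \<Longrightarrow> openin (AA_top Y) {q \<in> AA Y. lex_less a q}"
  unfolding AA_top_def by (rule topology_generated_by_Basis) blast

lemma open_AA: "openin (AA_top Y) (AA Y)"
  unfolding AA_top_def by (rule topology_generated_by_Basis) blast

lemma open_fst_lt: "openin (AA_top Y) {q \<in> AA Y. fst q < r}"
proof (cases "r > 1")
  case True
  then have "{q \<in> AA Y. fst q < r} = AA Y" by (auto simp: AA_mem)
  then show ?thesis using open_AA by simp
next
  case False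
  show ?thesis
  proof (subst openin_subopen, intro ballI)
    fix q assume q: "q \<in> {q \<in> AA Y. fst q < r}"
    define t where "t = (fst q + r) / 2"
    have t: "fst q < t" "t < r" "0 < t" "t \<le> 1" using q False by (auto simp: t_def AA_mem)
    have ta: "(t, 0) \<in> AA Y" using t by (simp add: AA_pair)
    show "\<exists>T. openin (AA_top Y) T \<and> q \<in> T \<and> T \<subseteq> {q \<in> AA Y. fst q < r}"
      using q t by (intro exI[of _ "{q \<in> AA Y. lex_less q (t,0)}"] conjI open_ray_lt ta)
        (auto simp: lex_less_def)
  qed
qed

lemma open_fst_gt: "openin (AA_top Y) {q \<in> AA Y. r < fst q}"
proof (cases "r \<le> 0")
  case True
  then have "{q \<in> AA Y. r < fst q} = AA Y" by (auto simp: AA_mem)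
  then show ?thesis using open_AA by simp
next
  case False
  show ?thesis
  proof (subst openin_subopen, intro ballI)
    fix q assume q: "q \<in> {q \<in> AA Y. r < fst q}"
    define t where "t = (fst q + r) / 2"
    have t: "t < fst q" "r < t" "0 < t" "t \<le> 1" using q False by (auto simp: t_def AA_mem)
    have ta: "(t, 0) \<in> AA Y" using t by (simp add: AA_pair)
    show "\<exists>T. openin (AA_top Y) T \<and> q \<in> T \<and> T \<subseteq> {q \<in> AA Y. r < fst q}"
      using q t by (intro exI[of _ "{q \<in> AA Y. lex_less (t,0) q}"] conjI open_ray_gt ta)
        (auto simp: lex_less_def)
  qed
qed



lemma countable_subsingleton:
  assumes "\<And>x y. x \<in> S \<Longrightarrow> y \<in> S \<Longrightarrow> x = y" shows "countable S"
proof (cases "S = {}")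
  case False
  then obtain x0 where "x0 \<in> S" by blast
  then have "S \<subseteq> {x0}" using assms by blast
  then show ?thesis using countable_subset by blast
qed simp

lemma countable_by_rat2:
  fixes Z :: "real set"
  assumes "\<And>x. x \<in> Z \<Longrightarrow> \<exists>r\<in>\<rat>. \<exists>b\<in>\<rat>. P r b x"
    and "\<And>r b x y. x \<in> Z \<Longrightarrow> y \<in> Z \<Longrightarrow> P r b x \<Longrightarrow> P r b y \<Longrightarrow> x < y \<Longrightarrow> False"
  shows "countable Z"
proof -
  have "Z \<subseteq> (\<Union>r\<in>\<rat>. \<Union>b\<in>\<rat>. {x \<in> Z. P r b x})" using assms(1) by blast
  moreover have "countable (\<Union>r\<in>\<rat>. \<Union>b\<in>\<rat>. {x \<in> Z. P r b x})"
  proof (intro countable_UN countable_rat countable_subsingleton)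
    fix r b x y assume "x \<in> {x \<in> Z. P r b x}" "y \<in> {x \<in> Z. P r b x}"
    then show "x = y" using assms(2)[of x y r b] assms(2)[of y x r b] by (metis linorder_neq_iff mem_Collect_eq)
  qed
  ultimately show ?thesis using countable_subset by blast
qed

lemma locext_countable:
  fixes g :: "real \<Rightarrow> real" and R :: "real \<Rightarrow> real \<Rightarrow> bool"
  assumes antis: "\<And>u v. R u v \<Longrightarrow> R v u \<Longrightarrow> u = v"
  shows "countable {g x | x. x \<in> T \<and> (\<exists>a b. a < x \<and> x < b \<and> (\<forall>z\<in>T. a < z \<and> z < b \<longrightarrow> R (g z) (g x)))}"
proof -
  define W where "W = (\<lambda>a b. {g x | x. x \<in> T \<and> a < x \<and> x < b \<and> (\<forall>z\<in>T. a < z \<and> z < b \<longrightarrow> R (g z) (g x))})"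
  have "{g x | x. x \<in> T \<and> (\<exists>a b. a < x \<and> x < b \<and> (\<forall>z\<in>T. a < z \<and> z < b \<longrightarrow> R (g z) (g x)))}
        \<subseteq> (\<Union>a\<in>\<rat>. \<Union>b\<in>\<rat>. W a b)"
  proof
    fix v assume "v \<in> {g x | x. x \<in> T \<and> (\<exists>a b. a < x \<and> x < b \<and> (\<forall>z\<in>T. a < z \<and> z < b \<longrightarrow> R (g z) (g x)))}"
    then obtain x a b where x: "v = g x" "x \<in> T" "a < x" "x < b" "\<forall>z\<in>T. a < z \<and> z < b \<longrightarrow> R (g z) (g x)"
      by blast
    obtain a' where a': "a' \<in> \<rat>" "a < a'" "a' < x" using Rats_dense_in_real x by blast
    obtain b' where b': "b' \<in> \<rat>" "x < b'" "b' < b" using Rats_dense_in_real x by blast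
    have "v \<in> W a' b'" unfolding W_def using x a' b' by force
    then show "v \<in> (\<Union>a\<in>\<rat>. \<Union>b\<in>\<rat>. W a b)" using a' b' by blast
  qed
  moreover have "countable (\<Union>a\<in>\<rat>. \<Union>b\<in>\<rat>. W a b)"
  proof (intro countable_UN countable_rat countable_subsingleton)
    fix a b u v assume "u \<in> W a b" "v \<in> W a b"
    then obtain x y where "u = g x" "x \<in> T" "a < x" "x < b" "\<forall>z\<in>T. a < z \<and> z < b \<longrightarrow> R (g z) (g x)"
      "v = g y" "y \<in> T" "a < y" "y < b" "\<forall>z\<in>T. a < z \<and> z < b \<longrightarrow> R (g z) (g y)"
      unfolding W_def by blast
    then show "u = v" using antis by metis
  qed
  ultimately show ?thesis using countable_subset by blast
qed

lemma s_maps: "continuous_map (AA_top X) (AA_top Y) s \<Longrightarrow> p \<in> AA X \<Longrightarrow> s p \<in> AA Y"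
  using continuous_map_image_subset_topspace topspace_AA by blast

lemma nb_pre:
  assumes "continuous_map (AA_top X) (AA_top Y) s" "openin (AA_top Y) V"
  shows "nb X {p \<in> AA X. s p \<in> V}"
  using openin_continuous_map_preimage[OF assms] open_nb topspace_AA by metis

lemma nb_right:
  assumes "nb X U" "p \<in> U" "p \<in> AA X" "fst p \<in> X \<or> snd p = 1"
  obtains b where "b > fst p" "\<And>q. q \<in> AA X \<Longrightarrow> fst p < fst q \<Longrightarrow> fst q < b \<Longrightarrow> q \<in> U"
  using assms unfolding nb_def by blast

lemma nb_left:
  assumes "nb X U" "p \<in> U" "p \<in> AA X" "snd p = 0"
  obtains a where "a < fst p" "\<And>q. q \<in> AA X \<Longrightarrow> a < fst q \<Longrightarrow> fst q < fst p \<Longrightarrow> q \<in> U"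
  using assms unfolding nb_def by blast

lemma jumps_countable:
  assumes sc: "continuous_map (AA_top X) (AA_top Y) s"
  shows "countable {x \<in> {0<..<1} - X. fst (s (x,0)) \<noteq> fst (s (x,1))}"
proof -
  define g where "g = (\<lambda>x. fst (s (x,0)))"
  define k where "k = (\<lambda>x. fst (s (x,1)))"
  define Z1 where "Z1 = {x \<in> {0<..<1} - X. g x < k x}"
  define Z2 where "Z2 = {x \<in> {0<..<1} - X. k x < g x}"
  have "countable Z1"
  proof (rule countable_by_rat2[where P="\<lambda>r b x. g x < r \<and> x < b \<and> (\<forall>q\<in>AA X. x < fst q \<and> fst q < b \<longrightarrow> r < fst (s q))"])
    fix x assume x: "x \<in> Z1"
    then obtain r where r: "r \<in> \<rat>" "g x < r" "r < k x" unfolding Z1_def using Rats_dense_in_real by blast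
    have x1: "(x,1) \<in> AA X" using x unfolding Z1_def by (auto simp: AA_pair)
    have nbU: "nb X {p \<in> AA X. s p \<in> {q \<in> AA Y. r < fst q}}" by (rule nb_pre[OF sc open_fst_gt])
    have "(x,1) \<in> {p \<in> AA X. s p \<in> {q \<in> AA Y. r < fst q}}"
      using x1 r s_maps[OF sc x1] unfolding k_def by auto
    then obtain b where b: "b > x" "\<And>q. q \<in> AA X \<Longrightarrow> x < fst q \<Longrightarrow> fst q < b \<Longrightarrow> q \<in> {p \<in> AA X. s p \<in> {q \<in> AA Y. r < fst q}}"
      using nb_right[OF nbU _ x1] by auto
    obtain b' where b': "b' \<in> \<rat>" "x < b'" "b' < b" using Rats_dense_in_real b(1) by blast
    show "\<exists>r\<in>\<rat>. \<exists>b\<in>\<rat>. g x < r \<and> x < b \<and> (\<forall>q\<in>AA X. x < fst q \<and> fst q < b \<longrightarrow> r < fst (s q))"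
      using r b' b(2) by (intro bexI[OF _ r(1)] bexI[OF _ b'(1)]) auto
  next
    fix r b x y assume "x \<in> Z1" "y \<in> Z1" and P: "g x < r \<and> x < b \<and> (\<forall>q\<in>AA X. x < fst q \<and> fst q < b \<longrightarrow> r < fst (s q))"
      "g y < r \<and> y < b \<and> (\<forall>q\<in>AA X. y < fst q \<and> fst q < b \<longrightarrow> r < fst (s q))" and xy: "x < y"
    then have "(y,0) \<in> AA X" unfolding Z1_def by (auto simp: AA_pair)
    then have "r < g y" using P xy unfolding g_def by auto
    then show False using P by auto
  qed
  moreover have "countable Z2"
  proof (rule countable_by_rat2[where P="\<lambda>r b x. r < g x \<and> x < b \<and> (\<forall>q\<in>AA X. x < fst q \<and> fst q < b \<longrightarrow> fst (s q) < r)"])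
    fix x assume x: "x \<in> Z2"
    then obtain r where r: "r \<in> \<rat>" "k x < r" "r < g x" unfolding Z2_def using Rats_dense_in_real by blast
    have x1: "(x,1) \<in> AA X" using x unfolding Z2_def by (auto simp: AA_pair)
    have nbU: "nb X {p \<in> AA X. s p \<in> {q \<in> AA Y. fst q < r}}" by (rule nb_pre[OF sc open_fst_lt])
    have "(x,1) \<in> {p \<in> AA X. s p \<in> {q \<in> AA Y. fst q < r}}"
      using x1 r s_maps[OF sc x1] unfolding k_def by auto
    then obtain b where b: "b > x" "\<And>q. q \<in> AA X \<Longrightarrow> x < fst q \<Longrightarrow> fst q < b \<Longrightarrow> q \<in> {p \<in> AA X. s p \<in> {q \<in> AA Y. fst q < r}}"
      using nb_right[OF nbU _ x1] by auto
    obtain b' where b': "b' \<in> \<rat>" "x < b'" "b' < b" using Rats_dense_in_real b(1) by blast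
    show "\<exists>r\<in>\<rat>. \<exists>b\<in>\<rat>. r < g x \<and> x < b \<and> (\<forall>q\<in>AA X. x < fst q \<and> fst q < b \<longrightarrow> fst (s q) < r)"
      using r b' b(2) by (intro bexI[OF _ r(1)] bexI[OF _ b'(1)]) auto
  next
    fix r b x y assume "x \<in> Z2" "y \<in> Z2" and P: "r < g x \<and> x < b \<and> (\<forall>q\<in>AA X. x < fst q \<and> fst q < b \<longrightarrow> fst (s q) < r)"
      "r < g y \<and> y < b \<and> (\<forall>q\<in>AA X. y < fst q \<and> fst q < b \<longrightarrow> fst (s q) < r)" and xy: "x < y"
    then have "(y,0) \<in> AA X" unfolding Z2_def by (auto simp: AA_pair)
    then have "g y < r" using P xy unfolding g_def by auto
    then show False using P by auto
  qed
  moreover have "{x \<in> {0<..<1} - X. fst (s (x,0)) \<noteq> fst (s (x,1))} = Z1 \<union> Z2"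
    unfolding Z1_def Z2_def g_def k_def by auto
  ultimately show ?thesis by simp
qed



lemma local_ext:
  assumes sc: "continuous_map (AA_top X) (AA_top Y) s" and XS: "X \<subseteq> {0<..<1}"
    and x: "x \<in> X" and ny: "fst (s (x,0)) \<notin> Y"
  shows "\<exists>a b. a < x \<and> x < b \<and> ((\<forall>z\<in>{0<..1}. a < z \<and> z < b \<longrightarrow> fst (s (z,0)) \<le> fst (s (x,0))) \<or>
                                 (\<forall>z\<in>{0<..1}. a < z \<and> z < b \<longrightarrow> fst (s (x,0)) \<le> fst (s (z,0))))"
proof -
  have x0: "(x,0) \<in> AA X" using x XS by (auto simp: AA_pair)
  obtain y i where yi: "s (x,0) = (y,i)" by (metis surj_pair)
  have yiA: "(y,i) \<in> AA Y" using s_maps[OF sc x0] yi by simp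
  have yY: "y \<notin> Y" using ny yi by simp
  have y0: "(y,0) \<in> AA Y" and y1: "(y,1) \<in> AA Y" using yiA yY by (auto simp: AA_pair)
  have i01: "i = 0 \<or> i = 1" using yiA by (auto simp: AA_pair)
  show ?thesis
  proof (cases "i = 0")
    case True
    define U where "U = {p \<in> AA X. s p \<in> {q \<in> AA Y. lex_less q (y,1)}}"
    have nbU: "nb X U" unfolding U_def by (rule nb_pre[OF sc open_ray_lt[OF y1]])
    have xU: "(x,0) \<in> U" unfolding U_def using x0 yi yiA True by (simp add: lex_less_def)
    obtain a where a: "a < x" "\<And>q. q \<in> AA X \<Longrightarrow> a < fst q \<Longrightarrow> fst q < x \<Longrightarrow> q \<in> U"
      using nb_left[OF nbU xU x0] by auto
    obtain b where b: "b > x" "\<And>q. q \<in> AA X \<Longrightarrow> x < fst q \<Longrightarrow> fst q < b \<Longrightarrow> q \<in> U"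
      using nb_right[OF nbU xU x0] x by auto
    have "\<forall>z\<in>{0<..1}. a < z \<and> z < b \<longrightarrow> fst (s (z,0)) \<le> fst (s (x,0))"
    proof (intro ballI impI)
      fix z :: real assume z: "z \<in> {0<..1}" "a < z \<and> z < b"
      have z0: "(z,0) \<in> AA X" using z XS by (auto simp: AA_pair)
      show "fst (s (z,0)) \<le> fst (s (x,0))"
      proof (cases "z = x")
        case False
        then have "(z,0) \<in> U" using a b z z0 by (metis fst_conv linorder_neq_iff)
        then show ?thesis unfolding U_def using yi by (auto simp: lex_less_def)
      qed simp
    qed
    then show ?thesis using a b by blast
  next
    case False
    then have i1: "i = 1" using i01 by simp
    define U where "U = {p \<in> AA X. s p \<in> {q \<in> AA Y. lex_less (y,0) q}}"
    have nbU: "nb X U" unfolding U_def by (rule nb_pre[OF sc open_ray_gt[OF y0]])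
    have xU: "(x,0) \<in> U" unfolding U_def using x0 yi yiA i1 by (simp add: lex_less_def)
    obtain a where a: "a < x" "\<And>q. q \<in> AA X \<Longrightarrow> a < fst q \<Longrightarrow> fst q < x \<Longrightarrow> q \<in> U"
      using nb_left[OF nbU xU x0] by auto
    obtain b where b: "b > x" "\<And>q. q \<in> AA X \<Longrightarrow> x < fst q \<Longrightarrow> fst q < b \<Longrightarrow> q \<in> U"
      using nb_right[OF nbU xU x0] x by auto
    have "\<forall>z\<in>{0<..1}. a < z \<and> z < b \<longrightarrow> fst (s (x,0)) \<le> fst (s (z,0))"
    proof (intro ballI impI)
      fix z :: real assume z: "z \<in> {0<..1}" "a < z \<and> z < b"
      have z0: "(z,0) \<in> AA X" using z XS by (auto simp: AA_pair)
      show "fst (s (x,0)) \<le> fst (s (z,0))"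
      proof (cases "z = x")
        case False
        then have "(z,0) \<in> U" using a b z z0 by (metis fst_conv linorder_neq_iff)
        then show ?thesis unfolding U_def using yi by (auto simp: lex_less_def)
      qed simp
    qed
    then show ?thesis using a b by blast
  qed
qed

lemma g_cont:
  assumes sc: "continuous_map (AA_top X) (AA_top Y) s" and XS: "X \<subseteq> {0<..<1}"
  shows "continuous_on ({0<..1} - {x \<in> {0<..<1} - X. fst (s (x,0)) \<noteq> fst (s (x,1))}) (\<lambda>x. fst (s (x,0)))"
  unfolding continuous_on_iff
proof (intro ballI allI impI)
  define D where "D = {0<..1} - {x \<in> {0<..<1} - X. fst (s (x,0)) \<noteq> fst (s (x,1))}"
  fix x e assume xD: "x \<in> {0<..1} - {x \<in> {0<..<1} - X. fst (s (x,0)) \<noteq> fst (s (x,1))}" and e: "(0::real) < e"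
  then have xD': "x \<in> D" unfolding D_def by simp
  define y where "y = fst (s (x,0))"
  define U where "U = {p \<in> AA X. s p \<in> {q \<in> AA Y. y - e < fst q} \<inter> {q \<in> AA Y. fst q < y + e}}"
  have nbU: "nb X U" unfolding U_def by (rule nb_pre[OF sc openin_Int[OF open_fst_gt open_fst_lt]])
  have x0: "(x,0) \<in> AA X" using xD' unfolding D_def by (auto simp: AA_pair)
  have xU: "(x,0) \<in> U" unfolding U_def y_def using x0 s_maps[OF sc x0] e by auto
  obtain a where a: "a < x" "\<And>q. q \<in> AA X \<Longrightarrow> a < fst q \<Longrightarrow> fst q < x \<Longrightarrow> q \<in> U"
    using nb_left[OF nbU xU x0] by auto
  obtain b where b: "b > x" "\<And>z. z \<in> D \<Longrightarrow> x < z \<Longrightarrow> z < b \<Longrightarrow> (z,0) \<in> U"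
  proof (cases "x = 1")
    case True
    show ?thesis by (rule that[of 2]) (use True xD' in \<open>auto simp: D_def\<close>)
  next
    case x1: False
    show ?thesis
    proof (cases "x \<in> X")
      case True
      obtain b where "b > x" "\<And>q. q \<in> AA X \<Longrightarrow> x < fst q \<Longrightarrow> fst q < b \<Longrightarrow> q \<in> U"
        using nb_right[OF nbU xU x0] True by auto
      then show ?thesis using that[of b] by (auto simp: D_def AA_pair)
    next
      case False
      have xx1: "(x,1) \<in> AA X" using False xD' by (auto simp: D_def AA_pair)
      have "fst (s (x,1)) = y" using False xD' x1 unfolding D_def y_def by auto
      then have xU1: "(x,1) \<in> U" unfolding U_def using xx1 s_maps[OF sc xx1] e by auto
      obtain b where "b > x" "\<And>q. q \<in> AA X \<Longrightarrow> x < fst q \<Longrightarrow> fst q < b \<Longrightarrow> q \<in> U"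
        using nb_right[OF nbU xU1 xx1] by auto
      then show ?thesis using that[of b] by (auto simp: D_def AA_pair)
    qed
  qed
  show "\<exists>d>0. \<forall>x'\<in>{0<..1} - {x \<in> {0<..<1} - X. fst (s (x,0)) \<noteq> fst (s (x,1))}.
          dist x' x < d \<longrightarrow> dist (fst (s (x',0))) (fst (s (x,0))) < e"
  proof (intro exI[of _ "min (x - a) (b - x)"] conjI ballI impI)
    show "0 < min (x - a) (b - x)" using a b by simp
    fix x' assume x': "x' \<in> {0<..1} - {x \<in> {0<..<1} - X. fst (s (x,0)) \<noteq> fst (s (x,1))}"
      and d: "dist x' x < min (x - a) (b - x)"
    have x'D: "x' \<in> D" using x' unfolding D_def by simp
    have x'0: "(x',0) \<in> AA X" using x'D unfolding D_def by (auto simp: AA_pair)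
    consider "x' < x" | "x' = x" | "x' > x" by linarith
    then show "dist (fst (s (x',0))) (fst (s (x,0))) < e"
    proof cases
      case 1
      then have "(x',0) \<in> U" using a(2)[OF x'0] d by (auto simp: dist_real_def)
      then show ?thesis unfolding U_def y_def by (auto simp: dist_real_def)
    next
      case 2 then show ?thesis using e by simp
    next
      case 3
      then have "(x',0) \<in> U" using b(2)[OF x'D] d by (auto simp: dist_real_def)
      then show ?thesis unfolding U_def y_def by (auto simp: dist_real_def)
    qed
  qed
qed



lemma e_lt: "0 < a \<Longrightarrow> (if P then a / 2 else min a b / 2) < (a::real)"
  by (auto simp: min_def)

lemma e_lt2: "0 < b \<Longrightarrow> \<not> P \<Longrightarrow> (if P then a / 2 else min a b / 2) < (b::real)"
  by (auto simp: min_def)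

lemma H_closed:
  assumes sc: "continuous_map (AA_top X) (AA_top Y) s" and c: "0 < c" "c \<le> 1"
  shows "closed ((\<lambda>p. fst (s p)) ` {p \<in> AA X. c \<le> fst p})"
  unfolding closed_def open_dist
proof (intro ballI)
  define H where "H = (\<lambda>p. fst (s p)) ` {p \<in> AA X. c \<le> fst p}"
  fix y assume "y \<in> - (\<lambda>p. fst (s p)) ` {p \<in> AA X. c \<le> fst p}"
  then have yH: "y \<notin> H" unfolding H_def by simp
  define Q where "Q = (\<lambda>x (t::real\<times>real\<times>real). fst t < x \<and> x < fst (snd t) \<and> snd (snd t) > 0 \<and>
      (\<forall>q\<in>AA X. fst t < fst q \<and> fst q < fst (snd t) \<longrightarrow> snd (snd t) < \<bar>fst (s q) - y\<bar>))"
  have loc: "\<exists>t. Q x t"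
    if x: "x \<in> {c..1}" for x
  proof -
    have x0: "(x,0) \<in> AA X" using x c by (auto simp: AA_pair)
    have d0: "fst (s (x,0)) \<noteq> y" using yH x0 x unfolding H_def by force
    define e where "e = (if x \<in> X then \<bar>fst (s (x,0)) - y\<bar> / 2
                         else min \<bar>fst (s (x,0)) - y\<bar> \<bar>fst (s (x,1)) - y\<bar> / 2)"
    have d1: "fst (s (x,1)) \<noteq> y" if "x \<notin> X"
    proof -
      have "(x,1) \<in> AA X" using x c that by (auto simp: AA_pair)
      then show ?thesis using yH x unfolding H_def by force
    qed
    have e0: "e > 0" unfolding e_def using d0 d1 by auto
    define U where "U = {p \<in> AA X. s p \<in> {q \<in> AA Y. fst q < y - e} \<union> {q \<in> AA Y. y + e < fst q}}"
    have nbU: "nb X U" unfolding U_def by (rule nb_pre[OF sc openin_Un[OF open_fst_lt open_fst_gt]])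
    have inU: "p \<in> U" if "p \<in> AA X" "\<bar>fst (s p) - y\<bar> > e" for p
      unfolding U_def using that s_maps[OF sc that(1)] by auto
    have a0: "\<bar>fst (s (x,0)) - y\<bar> > 0" using d0 by simp
    have "e < \<bar>fst (s (x,0)) - y\<bar>" unfolding e_def using e_lt[OF a0] by blast
    then have xU: "(x,0) \<in> U" using inU[OF x0] by blast
    obtain a where a: "a < x" "\<And>q. q \<in> AA X \<Longrightarrow> a < fst q \<Longrightarrow> fst q < x \<Longrightarrow> q \<in> U"
      using nb_left[OF nbU xU x0] by auto
    have xU1: "(x,1) \<in> U" if "x \<notin> X"
    proof -
      have "(x,1) \<in> AA X" using x c that by (auto simp: AA_pair)
      moreover have "\<bar>fst (s (x,1)) - y\<bar> > e"
      proof -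
        have "\<bar>fst (s (x,1)) - y\<bar> > 0" using d1[OF that] by simp
        then show ?thesis unfolding e_def using e_lt2[OF _ that] by blast
      qed
      ultimately show ?thesis using inU by blast
    qed
    obtain b where b: "b > x" "\<And>q. q \<in> AA X \<Longrightarrow> x < fst q \<Longrightarrow> fst q < b \<Longrightarrow> q \<in> U"
    proof (cases "x \<in> X")
      case True
      then show ?thesis using nb_right[OF nbU xU x0] that by auto
    next
      case False
      have "(x,1) \<in> AA X" using x c False by (auto simp: AA_pair)
      then show ?thesis using nb_right[OF nbU xU1[OF False]] that by auto
    qed
    have "\<forall>q\<in>AA X. a < fst q \<and> fst q < b \<longrightarrow> e < \<bar>fst (s q) - y\<bar>"
    proof (intro ballI impI)
      fix q assume q: "q \<in> AA X" "a < fst q \<and> fst q < b"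
      have "q \<in> U"
      proof -
        consider "fst q < x" | "fst q = x" | "fst q > x" by linarith
        then show ?thesis
        proof cases
          case 1 then show ?thesis using a q by blast
        next
          case 3 then show ?thesis using b q by blast
        next
          case 2
          obtain z i where zi: "q = (z,i)" by (metis surj_pair)
          have "i = 0 \<or> (i = 1 \<and> x \<notin> X)" using q(1) 2 zi by (auto simp: AA_pair)
          then show ?thesis using xU xU1 zi 2 by auto
        qed
      qed
      then show "e < \<bar>fst (s q) - y\<bar>" unfolding U_def by auto
    qed
    then show ?thesis using a(1) b(1) e0 unfolding Q_def by (intro exI[of _ "(a,b,e)"]) auto
  qed
  then have "\<forall>x\<in>{c..1}. \<exists>t. Q x t" by blast
  then obtain t where t0: "\<forall>x\<in>{c..1}. Q x (t x)" using bchoice[of "{c..1}" Q] by blast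
  have t: "fst (t x) < x \<and> x < fst (snd (t x)) \<and> snd (snd (t x)) > 0 \<and>
      (\<forall>q\<in>AA X. fst (t x) < fst q \<and> fst q < fst (snd (t x)) \<longrightarrow> snd (snd (t x)) < \<bar>fst (s q) - y\<bar>)"
    if "x \<in> {c..1}" for x using t0 that unfolding Q_def by blast
  have cov: "{c..1} \<subseteq> (\<Union>x\<in>{c..1}. {fst (t x)<..<fst (snd (t x))})"
  proof
    fix x assume "x \<in> {c..1}"
    then show "x \<in> (\<Union>x\<in>{c..1}. {fst (t x)<..<fst (snd (t x))})" using t[of x] by auto
  qed
  obtain C' where C': "C' \<subseteq> {c..1}" "finite C'" "{c..1} \<subseteq> (\<Union>x\<in>C'. {fst (t x)<..<fst (snd (t x))})"
    by (rule compactE_image[OF compact_Icc _ cov]) auto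
  have C'ne: "C' \<noteq> {}" using C'(3) c by auto
  define e0 where "e0 = Min ((\<lambda>x. snd (snd (t x))) ` C')"
  have e0pos: "e0 > 0" unfolding e0_def
  proof (subst Min_gr_iff)
    show "finite ((\<lambda>x. snd (snd (t x))) ` C')" using C'(2) by simp
    show "(\<lambda>x. snd (snd (t x))) ` C' \<noteq> {}" using C'ne by simp
    show "\<forall>a\<in>(\<lambda>x. snd (snd (t x))) ` C'. 0 < a" using t C'(1) by blast
  qed
  have e0le: "e0 \<le> snd (snd (t x))" if "x \<in> C'" for x unfolding e0_def using C'(2) that by simp
  show "\<exists>e>0. \<forall>y'. dist y' y < e \<longrightarrow> y' \<in> - (\<lambda>p. fst (s p)) ` {p \<in> AA X. c \<le> fst p}"
  proof (intro exI[of _ e0] conjI allI impI e0pos)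
    fix y' assume d: "dist y' y < e0"
    show "y' \<in> - (\<lambda>p. fst (s p)) ` {p \<in> AA X. c \<le> fst p}"
    proof
      assume "y' \<in> (\<lambda>p. fst (s p)) ` {p \<in> AA X. c \<le> fst p}"
      then obtain p where p: "p \<in> AA X" "c \<le> fst p" "y' = fst (s p)" by blast
      have "fst p \<in> {c..1}" using p by (auto simp: AA_mem)
      then obtain x where x: "x \<in> C'" "fst (t x) < fst p" "fst p < fst (snd (t x))" using C'(3) by auto
      have tx: "\<forall>q\<in>AA X. fst (t x) < fst q \<and> fst q < fst (snd (t x)) \<longrightarrow> snd (snd (t x)) < \<bar>fst (s q) - y\<bar>"
        using t[of x] x(1) C'(1) by blast
      have "snd (snd (t x)) < \<bar>fst (s p) - y\<bar>" using tx x(2,3) p(1) by blast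
      then show False using e0le[OF x(1)] d p(3) by (auto simp: dist_real_def)
    qed
  qed
qed




lemma card_c_unc: "card_c A \<Longrightarrow> uncountable A"
  unfolding card_c_def using countable_eqpoll eqpoll_sym uncountable_UNIV_real by blast

lemma unc_of_cantor: "inj (c::(nat\<Rightarrow>bool)\<Rightarrow>real) \<Longrightarrow> range c \<subseteq> K \<Longrightarrow> uncountable K"
  using uncountable_cantor countable_image_inj_on countable_subset by (metis inj_on_subset subset_UNIV)

lemma card_c_of_cantor:
  assumes "inj (c::(nat\<Rightarrow>bool)\<Rightarrow>real)" "range c \<subseteq> (K::real set)" shows "card_c K"
proof -
  obtain f :: "real \<Rightarrow> (nat \<Rightarrow> bool)" where f: "inj f" using real_inj_cantor by blast
  have "(UNIV::real set) \<lesssim> K" unfolding lepoll_def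
    using assms f by (intro exI[of _ "c \<circ> f"]) (auto simp: inj_compose)
  moreover have "K \<lesssim> (UNIV::real set)" by (rule subset_imp_lepoll) simp
  ultimately show ?thesis unfolding card_c_def using lepoll_antisym by blast
qed

theorem lemma4p1:
  fixes V :: "real set" and A :: "real \<Rightarrow> real set" and I :: "real set"
    and C :: "real set \<Rightarrow> (real \<Rightarrow> real) \<Rightarrow> real set"
    and X Y :: "real set" and s :: "real \<times> nat \<Rightarrow> real \<times> nat"
  assumes I_card: "card_c I"
    and C_choice: "\<And>D f. in_F D f \<Longrightarrow>
        C D f \<subseteq> D \<and> bij_betw f (C D f) (f ` S_set D f)"
    and V_bern: "bernstein V" and V_sub: "V \<subseteq> {0<..<1}" and V_Q: "V \<inter> \<rat> = {}"
    and A_bern: "\<And>\<beta>. \<beta> \<in> I \<Longrightarrow> bernstein (A \<beta>)"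
    and A_sub: "\<And>\<beta>. \<beta> \<in> I \<Longrightarrow> A \<beta> \<subseteq> {0<..<1}"
    and A_Q: "\<And>\<beta>. \<beta> \<in> I \<Longrightarrow> A \<beta> \<inter> \<rat> = {}"
    and A_disj: "\<And>\<beta> \<gamma>. \<beta> \<in> I \<Longrightarrow> \<gamma> \<in> I \<Longrightarrow> \<beta> \<noteq> \<gamma> \<Longrightarrow> A \<beta> \<inter> A \<gamma> = {}"
    and AV_disj: "\<And>\<beta>. \<beta> \<in> I \<Longrightarrow> A \<beta> \<inter> V = {}"
    and big: "\<And>D f \<beta>. in_F D f \<Longrightarrow> card_c (f ` S_set D f) \<Longrightarrow> \<beta> \<in> I \<Longrightarrow>
        card_c (C D f \<inter> A \<beta>) \<and> card_c (f ` (C D f \<inter> A \<beta>) \<inter> V)"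
    and X_sub: "X \<subseteq> {0<..<1}" and Y_sub: "Y \<subseteq> {0<..<1}"
    and QX: "\<rat> \<inter> {0<..<1} \<subseteq> X"
    and alpha: "\<exists>\<alpha>\<in>I. A \<alpha> \<subseteq> X \<and> Y \<inter> (A \<alpha> \<union> V) = {}"
    and s_cont: "continuous_map (AA_top X) (AA_top Y) s"
  shows "countable (s ` topspace (AA_top X))"
proof -
  obtain \<alpha> where al: "\<alpha> \<in> I" "A \<alpha> \<subseteq> X" "Y \<inter> (A \<alpha> \<union> V) = {}" using alpha by blast
  define g where "g = (\<lambda>x. fst (s (x,0)))"
  define k where "k = (\<lambda>x. fst (s (x,1)))"
  define J where "J = {x \<in> {0<..<1} - X. fst (s (x,0)) \<noteq> fst (s (x,1))}"
  define D where "D = {0<..1} - J"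
  have Jc: "countable J" unfolding J_def by (rule jumps_countable[OF s_cont])
  have gcont: "continuous_on D g" unfolding D_def J_def g_def by (rule g_cont[OF s_cont X_sub])
  have g01: "g x \<in> {0..1}" if "x \<in> {0<..1}" for x
  proof -
    have "(x,0) \<in> AA X" using that by (auto simp: AA_pair)
    then show ?thesis using s_maps[OF s_cont] unfolding g_def by (auto simp: AA_mem)
  qed
  have "{0..1} - D \<subseteq> insert 0 J" unfolding D_def by auto
  then have cD: "countable ({0..1} - D)"
    using countable_subset Jc by (metis countable_insert)
  have inF: "in_F D g" unfolding in_F_def
  proof (intro conjI)
    show "D \<subseteq> {0..1}" unfolding D_def by auto
    show "countable ({0..1} - D)" by (rule cD)
    show "continuous_on D g" by (rule gcont)
    show "g ` D \<subseteq> {0..1}" using g01 unfolding D_def by auto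
  qed
  define T where "T = {0<..(1::real)}"
  define M where "M = {g x | x. x \<in> T \<and> (\<exists>a b. a < x \<and> x < b \<and> (\<forall>z\<in>T. a < z \<and> z < b \<longrightarrow> g z \<le> g x))}
     \<union> {g x | x. x \<in> T \<and> (\<exists>a b. a < x \<and> x < b \<and> (\<forall>z\<in>T. a < z \<and> z < b \<longrightarrow> (\<lambda>u v. v \<le> u) (g z) (g x)))}"
  have Mc: "countable M" unfolding M_def
    by (intro countable_Un locext_countable) auto
  have KL: "g x \<in> M" if xX: "x \<in> X" and gY: "g x \<notin> Y" for x
  proof -
    have xT: "x \<in> T" using xX X_sub unfolding T_def by auto
    obtain a b where ab: "a < x" "x < b" and
      alt: "(\<forall>z\<in>T. a < z \<and> z < b \<longrightarrow> g z \<le> g x) \<or> (\<forall>z\<in>T. a < z \<and> z < b \<longrightarrow> g x \<le> g z)"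
      using local_ext[OF s_cont X_sub xX] gY unfolding T_def g_def by blast
    from alt show ?thesis
    proof
      assume "\<forall>z\<in>T. a < z \<and> z < b \<longrightarrow> g z \<le> g x"
      then have "g x \<in> {g x | x. x \<in> T \<and> (\<exists>a b. a < x \<and> x < b \<and> (\<forall>z\<in>T. a < z \<and> z < b \<longrightarrow> g z \<le> g x))}"
        using ab xT by blast
      then show ?thesis unfolding M_def by blast
    next
      assume "\<forall>z\<in>T. a < z \<and> z < b \<longrightarrow> g x \<le> g z"
      then have "g x \<in> {g x | x. x \<in> T \<and> (\<exists>a b. a < x \<and> x < b \<and> (\<forall>z\<in>T. a < z \<and> z < b \<longrightarrow> (\<lambda>u v. v \<le> u) (g z) (g x)))}"
        using ab xT by blast
      then show ?thesis unfolding M_def by blast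
    qed
  qed
  have notc: "\<not> card_c (g ` S_set D g)"
  proof
    assume cc: "card_c (g ` S_set D g)"
    have "card_c (g ` (C D g \<inter> A \<alpha>) \<inter> V)" using big[OF inF cc al(1)] by blast
    moreover have "g ` (C D g \<inter> A \<alpha>) \<inter> V \<subseteq> M"
    proof
      fix v assume "v \<in> g ` (C D g \<inter> A \<alpha>) \<inter> V"
      then obtain x where x: "x \<in> A \<alpha>" "v = g x" "v \<in> V" by blast
      have "x \<in> X" using x al by blast
      moreover have "g x \<notin> Y" using x al by blast
      ultimately show "v \<in> M" using KL x by blast
    qed
    ultimately show False using Mc card_c_unc countable_subset by blast
  qed
  define Fix where "Fix = {x \<in> D. g x = x}"
  have Fixc: "countable Fix"
  proof (rule ccontr)
    assume uF: "uncountable Fix"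
    have "closedin (top_of_set D) {x \<in> D. g x - x = 0}"
      by (rule continuous_closedin_preimage_constant) (intro continuous_intros gcont)
    moreover have "{x \<in> D. g x - x = 0} = Fix" unfolding Fix_def by auto
    ultimately obtain Tc where Tc: "closed Tc" "Fix = D \<inter> Tc" unfolding closedin_closed by auto
    define K where "K = closure Fix"
    have KD: "K \<inter> D \<subseteq> Fix" unfolding K_def using Tc closure_minimal[of Fix Tc] by blast
    have K01: "K \<subseteq> {0..1}" unfolding K_def
      by (rule closure_minimal) (auto simp: Fix_def D_def)
    have uK: "uncountable K" unfolding K_def using uF closure_subset countable_subset by blast
    have Nc: "countable (M \<union> ({0..1} - D))"
      using Mc cD by blast
    have "closed K" unfolding K_def by simp
    then obtain K' and c :: "(nat\<Rightarrow>bool)\<Rightarrow>real" where K': "closed K'" "K' \<subseteq> K - (M \<union> ({0..1} - D))" "inj c" "range c \<subseteq> K'"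
      using perfect_avoid[of K "M \<union> ({0..1} - D)"] Nc K01 uK by blast
    have "uncountable K'" using unc_of_cantor K' by blast
    moreover have "K' \<subseteq> {0..1}" using K' K01 by blast
    ultimately have "A \<alpha> \<inter> K' \<noteq> {}" using A_bern[OF al(1)] K'(1) unfolding bernstein_def by blast
    then obtain x where x: "x \<in> A \<alpha>" "x \<in> K'" by blast
    have xD: "x \<in> D" using x K' K01 by blast
    have "x \<in> Fix" using xD x K' KD by blast
    then have gx: "g x = x" unfolding Fix_def by simp
    have "x \<in> X" using x al by blast
    moreover have "x \<notin> Y" using x al by blast
    then have "g x \<notin> Y" using gx by simp
    ultimately have "g x \<in> M" using KL by blast
    then have "x \<in> M" using gx by simp
    then show False using x(2) K'(2) by blast
  qed
  define N2 where "N2 = Fix \<union> g ` J \<union> k ` J \<union> {k 1}"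
  have N2c: "countable N2" unfolding N2_def using Fixc Jc by auto
  have kg: "k x = g x" if "x \<in> {0<..<1}" "x \<notin> X" "x \<notin> J" for x
    using that unfolding J_def g_def k_def by auto
  have gDc: "countable (g ` D)"
  proof (rule ccontr)
    assume ugD: "uncountable (g ` D)"
    have "g ` D \<subseteq> (\<Union>n\<in>{0<..}. g ` (D \<inter> {inverse (real n)..1}))"
    proof
      fix v assume "v \<in> g ` D"
      then obtain x where x: "x \<in> D" "v = g x" by blast
      then have "x > 0" unfolding D_def by auto
      then obtain n where n: "n > 0" "inverse (real n) < x" using ex_inverse_of_nat_less by blast
      have "x \<le> 1" using x(1) unfolding D_def by auto
      then have "x \<in> D \<inter> {inverse (real n)..1}" using x(1) n(2) by auto
      then have "v \<in> g ` (D \<inter> {inverse (real n)..1})" using x(2) by blast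
      then show "v \<in> (\<Union>n\<in>{0<..}. g ` (D \<inter> {inverse (real n)..1}))" using n(1) by blast
    qed
    have "\<exists>n>(0::nat). uncountable (g ` (D \<inter> {inverse (real n)..1}))"
    proof (rule ccontr)
      assume "\<not> (\<exists>n>(0::nat). uncountable (g ` (D \<inter> {inverse (real n)..1})))"
      then have h: "\<And>n. n > 0 \<Longrightarrow> countable (g ` (D \<inter> {inverse (real n)..1}))" by blast
      have "countable (\<Union>n\<in>{0<..}. g ` (D \<inter> {inverse (real n)..1}))"
        by (intro countable_UN) (auto intro: h)
      then show False using ugD \<open>g ` D \<subseteq> _\<close> countable_subset by blast
    qed
    then obtain n where n: "n > (0::nat)" "uncountable (g ` (D \<inter> {inverse (real n)..1}))" by blast
    define c where "c = inverse (real n)"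
    have c: "0 < c" "c \<le> 1" unfolding c_def using n(1) by (auto simp: field_simps)
    define H where "H = (\<lambda>p. fst (s p)) ` {p \<in> AA X. c \<le> fst p}"
    have Hcl: "closed H" unfolding H_def by (rule H_closed[OF s_cont c])
    have H01: "H \<subseteq> {0..1}" unfolding H_def using s_maps[OF s_cont] by (auto simp: AA_mem)
    have "g ` (D \<inter> {c..1}) \<subseteq> H"
    proof
      fix v assume "v \<in> g ` (D \<inter> {c..1})"
      then obtain x where x: "x \<in> D" "c \<le> x" "v = g x" by auto
      have "(x,0) \<in> AA X" using x unfolding D_def by (auto simp: AA_pair)
      then have "(x,0) \<in> {p \<in> AA X. c \<le> fst p}" using x(2) by simp
      then have "fst (s (x,0)) \<in> H" unfolding H_def by (rule imageI)
      then show "v \<in> H" using x(3) unfolding g_def by simp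
    qed
    then have uH: "uncountable H" using n(2) countable_subset unfolding c_def by blast
    obtain K' and cc :: "(nat\<Rightarrow>bool)\<Rightarrow>real" where K': "K' \<subseteq> H - N2" "inj cc" "range cc \<subseteq> K'"
      using perfect_avoid[OF Hcl H01 uH N2c] by blast
    have "H - N2 \<subseteq> g ` S_set D g"
    proof
      fix v assume v: "v \<in> H - N2"
      then obtain p where p: "p \<in> AA X" "c \<le> fst p" "v = fst (s p)" unfolding H_def by blast
      obtain x i where xi: "p = (x,i)" by (metis surj_pair)
      have xr: "0 < x" "x \<le> 1" using p xi by (auto simp: AA_pair)
      have gen: "v \<in> g ` S_set D g" if "v = g x" "x \<notin> J"
      proof -
        have xD: "x \<in> D" using xr that unfolding D_def by auto
        have "g x \<noteq> x"
        proof
          assume "g x = x"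
          then have "x \<in> Fix" using xD unfolding Fix_def by simp
          then show False using v that \<open>g x = x\<close> unfolding N2_def by auto
        qed
        then show ?thesis using xD that unfolding S_set_def by blast
      qed
      have "i = 0 \<or> (i = 1 \<and> x \<notin> X)" using p xi by (auto simp: AA_pair)
      then show "v \<in> g ` S_set D g"
      proof
        assume "i = 0"
        then have vg: "v = g x" using p xi unfolding g_def by simp
        show ?thesis
        proof (cases "x \<in> J")
          case True then show ?thesis using v vg unfolding N2_def by auto
        qed (rule gen[OF vg])
      next
        assume i1: "i = 1 \<and> x \<notin> X"
        then have vk: "v = k x" using p xi unfolding k_def by simp
        show ?thesis
        proof (cases "x \<in> J \<or> x = 1")
          case True then show ?thesis using v vk unfolding N2_def by auto
        next
          case False
          then have "k x = g x" using kg xr i1 by auto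
          then show ?thesis using gen vk False by auto
        qed
      qed
    qed
    then have "card_c (g ` S_set D g)" using card_c_of_cantor[of cc] K' by blast
    then show False using notc by blast
  qed
  define Q where "Q = g ` D \<union> g ` J \<union> k ` J \<union> {k 1}"
  have Qc: "countable Q" unfolding Q_def using gDc Jc by auto
  have "s ` topspace (AA_top X) \<subseteq> Q \<times> {0,1}"
  proof
    fix w assume "w \<in> s ` topspace (AA_top X)"
    then obtain p where p: "p \<in> AA X" "w = s p" unfolding topspace_AA by blast
    have wA: "w \<in> AA Y" using s_maps[OF s_cont p(1)] p by simp
    obtain x i where xi: "p = (x,i)" by (metis surj_pair)
    have xr: "0 < x" "x \<le> 1" using p xi by (auto simp: AA_pair)
    have "fst w \<in> Q"
    proof -
      have "i = 0 \<or> (i = 1 \<and> x \<notin> X)" using p xi by (auto simp: AA_pair)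
      then show ?thesis
      proof
        assume "i = 0"
        then have "fst w = g x" using p xi unfolding g_def by simp
        then show ?thesis using xr unfolding Q_def D_def by auto
      next
        assume i1: "i = 1 \<and> x \<notin> X"
        then have wk: "fst w = k x" using p xi unfolding k_def by simp
        show ?thesis
        proof (cases "x \<in> J \<or> x = 1")
          case True then show ?thesis using wk unfolding Q_def by auto
        next
          case False
          then have "k x = g x" using kg xr i1 by auto
          then show ?thesis using wk False xr unfolding Q_def D_def by auto
        qed
      qed
    qed
    moreover have "snd w \<in> {0,1}" using wA by (simp add: AA_mem)
    ultimately show "w \<in> Q \<times> {0,1}" by (cases w) auto
  qed
  moreover have "countable (Q \<times> {0::nat,1})" using Qc by auto
  ultimately show ?thesis using countable_subset by blast
qed


end
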